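(* Let $A$ and $B$ be two $n\times n$ generalized tournament matrices with the same principal minors of orders at most $4$. Then $A$ is inseparable if and only if $B$ is inseparable.
   Context: A generalized tournament matrix of order $n$ is a real $n\times n$ matrix $M=(m_{ij})$ with nonnegative entries satisfying $M+M^{t}=J_n-I_n$. Write $[n]=\{1,\ldots,n\}$. A clan of $M$ is a subset $X\subseteq[n]$ such that for all $i,j\in X$ and $k\in[n]\setminus X$, $m_{ik}=m_{jk}$ and $m_{ki}=m_{kj}$. $M$ is separable if $[n]$ can be partitioned into two nonempty clans, and inseparable otherwise. *)

theory Defs
  imports "Jordan_Normal_Form.Determinant" "Jordan_Normal_Form.DL_Submatrix"
begin

text \<open>Matrices are JNF matrices with indices 0..<n (so [n] is rendered as {0..<n}).\<close>

definition gen_tournament :: "nat \<Rightarrow> real mat \<Rightarrow> bool" where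
  "gen_tournament n M \<longleftrightarrow> M \<in> carrier_mat n n
     \<and> (\<forall>i<n. \<forall>j<n. M $$ (i,j) \<ge> 0)
     \<and> M + transpose_mat M = mat n n (\<lambda>(i,j). if i = j then 0 else 1)"

definition clan :: "nat \<Rightarrow> real mat \<Rightarrow> nat set \<Rightarrow> bool" where
  "clan n M X \<longleftrightarrow> X \<subseteq> {0..<n}
     \<and> (\<forall>i\<in>X. \<forall>j\<in>X. \<forall>k\<in>{0..<n} - X.
          M $$ (i,k) = M $$ (j,k) \<and> M $$ (k,i) = M $$ (k,j))"

definition separable :: "nat \<Rightarrow> real mat \<Rightarrow> bool" where
  "separable n M \<longleftrightarrow> (\<exists>X Y. X \<noteq> {} \<and> Y \<noteq> {} \<and> X \<inter> Y = {} \<and> X \<union> Y = {0..<n}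
     \<and> clan n M X \<and> clan n M Y)"

definition inseparable :: "nat \<Rightarrow> real mat \<Rightarrow> bool" where
  "inseparable n M \<longleftrightarrow> \<not> separable n M"

definition principal_minor :: "real mat \<Rightarrow> nat set \<Rightarrow> real" where
  "principal_minor M S = det (submatrix M S S)"

end

theory Submission
  imports Defs
begin

lemma det2: "det (mat 2 2 f) = (f(0,0)*f(1,1) - f(0,1)*f(1,0) :: real)"
  apply (subst laplace_expansion_column[where j=0 and n=2])
  apply (auto simp: cofactor_def mat_delete_def det_single numeral_2_eq_2)
  done
lemma det3: "det (mat 3 3 f) = (f(0,0)*f(1,1)*f(2,2) - f(0,0)*f(1,2)*f(2,1) - f(1,0)*f(0,1)*f(2,2) + f(1,0)*f(0,2)*f(2,1) + f(2,0)*f(0,1)*f(1,2) - f(2,0)*f(0,2)*f(1,1) :: real)"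
  apply (subst laplace_expansion_column[where j=0 and n=3])
  apply (auto simp: cofactor_def mat_delete_def det2[unfolded numeral_2_eq_2] numeral_3_eq_3 numeral_2_eq_2 algebra_simps)
  done
lemma pick2: assumes "i<(j::nat)" shows "pick {i,j} 0 = i" "pick {i,j} (Suc 0) = j"
proof -
  show a: "pick {i,j} 0 = i" unfolding pick.simps by (rule Least_equality) (use assms in auto)
  show "pick {i,j} (Suc 0) = j" unfolding pick.simps(2) a using assms by (auto intro!: Least_equality)
qed
lemma pick3: assumes "i<(j::nat)" "j<k" shows "pick {i,j,k} 0 = i" "pick {i,j,k} (Suc 0) = j" "pick {i,j,k} (Suc (Suc 0)) = k"
proof -
  show a: "pick {i,j,k} 0 = i" unfolding pick.simps by (rule Least_equality) (use assms in auto)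
  show b: "pick {i,j,k} (Suc 0) = j" unfolding pick.simps(2) a using assms by (auto intro!: Least_equality)
  show "pick {i,j,k} (Suc (Suc 0)) = k" unfolding pick.simps(2)[of _ "Suc 0"] b using assms by (auto intro!: Least_equality)
qed
lemma minor2: assumes "(M::real mat) \<in> carrier_mat n n" "i<j" "j<n"
  shows "det (submatrix M {i,j} {i,j}) = M$$(i,i)*M$$(j,j) - M$$(i,j)*M$$(j,i)"
proof -
  have "{a. a < n \<and> a \<in> {i,j}} = {i,j}" using assms by auto
  then have c: "card {a. a < n \<and> a \<in> {i,j}} = 2" using assms by (simp add: card_insert_if)
  have "submatrix M {i,j} {i,j} = mat 2 2 (\<lambda>(a,b). M $$ (pick {i,j} a, pick {i,j} b))"
    unfolding submatrix_def using assms c by simp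
  then show ?thesis using det2[of "\<lambda>(a,b). M $$ (pick {i,j} a, pick {i,j} b)"] pick2[OF assms(2)] by (simp del: pick.simps)
qed
lemma minor3: assumes "(M::real mat) \<in> carrier_mat n n" "i<j" "j<k" "k<n"
  shows "det (submatrix M {i,j,k} {i,j,k}) = M$$(i,i)*M$$(j,j)*M$$(k,k) - M$$(i,i)*M$$(j,k)*M$$(k,j) - M$$(j,i)*M$$(i,j)*M$$(k,k) + M$$(j,i)*M$$(i,k)*M$$(k,j) + M$$(k,i)*M$$(i,j)*M$$(j,k) - M$$(k,i)*M$$(i,k)*M$$(j,j)"
proof -
  have "{a. a < n \<and> a \<in> {i,j,k}} = {i,j,k}" using assms by auto
  then have c: "card {a. a < n \<and> a \<in> {i,j,k}} = 3" using assms by (simp add: card_insert_if)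
  have "submatrix M {i,j,k} {i,j,k} = mat 3 3 (\<lambda>(a,b). M $$ (pick {i,j,k} a, pick {i,j,k} b))"
    unfolding submatrix_def using assms c by simp
  then show ?thesis using det3[of "\<lambda>(a,b). M $$ (pick {i,j,k} a, pick {i,j,k} b)"] pick3[OF assms(2,3)] by (simp add: numeral_2_eq_2 del: pick.simps)
qed

lemma gt_carrier: "gen_tournament n M \<Longrightarrow> M \<in> carrier_mat n n"
  unfolding gen_tournament_def by auto

lemma gt_entry: assumes "gen_tournament n M" "i<n" "j<n"
  shows "M$$(i,j) + M$$(j,i) = (if i = j then 0 else 1)"
proof -
  have c: "M \<in> carrier_mat n n" and e: "M + transpose_mat M = mat n n (\<lambda>(i,j). if i = j then 0 else 1)"
    using assms(1) unfolding gen_tournament_def by auto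
  have "(M + transpose_mat M) $$ (i,j) = M$$(i,j) + M$$(j,i)" using c assms by auto
  then show ?thesis using e assms by simp
qed

lemma gt_diag: "gen_tournament n M \<Longrightarrow> i<n \<Longrightarrow> M$$(i,i) = 0"
  using gt_entry[of n M i i] by simp

lemma gt_sum: "gen_tournament n M \<Longrightarrow> i<n \<Longrightarrow> j<n \<Longrightarrow> i \<noteq> j \<Longrightarrow> M$$(j,i) = 1 - M$$(i,j)"
  using gt_entry[of n M i j] by simp

lemma pm2_sorted: assumes "gen_tournament n M" "i<j" "j<n"
  shows "principal_minor M {i,j} = - M$$(i,j)*M$$(j,i)"
  using minor2[OF gt_carrier[OF assms(1)] assms(2,3)] gt_diag[OF assms(1), of i] gt_diag[OF assms(1), of j] assms
  unfolding principal_minor_def by simp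

lemma pm2: assumes "gen_tournament n M" "i<n" "j<n" "i\<noteq>j"
  shows "principal_minor M {i,j} = - M$$(i,j)*M$$(j,i)"
proof (cases "i<j")
  case True then show ?thesis using pm2_sorted assms by blast
next
  case False then have "j<i" using assms by simp
  then show ?thesis using pm2_sorted[OF assms(1) \<open>j<i\<close> assms(2)] by (simp add: insert_commute mult.commute)
qed

definition F3 :: "real mat \<Rightarrow> nat \<Rightarrow> nat \<Rightarrow> nat \<Rightarrow> real" where
  "F3 M i j k = M$$(i,j)*M$$(j,k)*M$$(k,i) + M$$(i,k)*M$$(k,j)*M$$(j,i)"

lemma pm3_sorted: assumes "gen_tournament n M" "i<j" "j<k" "k<n"
  shows "principal_minor M {i,j,k} = F3 M i j k"
  using minor3[OF gt_carrier[OF assms(1)] assms(2,3,4)] gt_diag[OF assms(1), of i] gt_diag[OF assms(1), of j]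
    gt_diag[OF assms(1), of k] assms
  unfolding principal_minor_def F3_def by (simp add: algebra_simps)

lemma pm3: assumes "gen_tournament n M" "i<n" "j<n" "k<n" "i\<noteq>j" "j\<noteq>k" "i\<noteq>k"
  shows "principal_minor M {i,j,k} = F3 M i j k"
proof -
  have "i<j \<and> j<k \<or> i<k \<and> k<j \<or> j<i \<and> i<k \<or> j<k \<and> k<i \<or> k<i \<and> i<j \<or> k<j \<and> j<i"
    using assms by linarith
  then show ?thesis
  proof (elim disjE conjE)
  qed (drule (1) pm3_sorted[OF assms(1)], use assms in \<open>simp_all add: insert_commute F3_def algebra_simps\<close>)+
qed

lemma sep_intro: assumes "gen_tournament n B" "P \<noteq> {}" "P \<subseteq> {0..<n}" "{0..<n} - P \<noteq> {}"
  and "\<And>p q. p \<in> P \<Longrightarrow> q \<in> {0..<n} - P \<Longrightarrow> B$$(p,q) = c"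
  shows "separable n B"
  unfolding separable_def
proof (intro exI conjI)
  let ?Q = "{0..<n} - P"
  show "P \<noteq> {}" "?Q \<noteq> {}" "P \<inter> ?Q = {}" "P \<union> ?Q = {0..<n}" using assms by auto
  have r: "B$$(q,p) = 1 - c" if "p \<in> P" "q \<in> ?Q" for p q
    using gt_sum[OF assms(1), of p q] assms(3) assms(5)[OF that] that by (metis DiffD1 DiffD2 atLeastLessThan_iff subsetD)
  show "clan n B P" unfolding clan_def using assms(3,5) r by auto
  show "clan n B ?Q" unfolding clan_def using assms(3,5) r by auto
qed

lemma sep_transfer:
  assumes GA: "gen_tournament n A" and GB: "gen_tournament n B"
    and pm: "\<And>S. S \<subseteq> {0..<n} \<Longrightarrow> card S \<le> 4 \<Longrightarrow> principal_minor A S = principal_minor B S"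
    and sA: "separable n A"
  shows "separable n B"
proof -
  obtain X Y where XY: "X \<noteq> {}" "Y \<noteq> {}" "X \<inter> Y = {}" "X \<union> Y = {0..<n}" "clan n A X" "clan n A Y"
    using sA unfolding separable_def by blast
  obtain x0 y0 where x0: "x0 \<in> X" and y0: "y0 \<in> Y" using XY by blast
  define c where "c = A$$(x0,y0)"
  have Xn: "x < n" if "x \<in> X" for x using XY that by auto
  have Yn: "y < n" if "y \<in> Y" for y using XY that by auto
  have XYne: "x \<noteq> y" if "x \<in> X" "y \<in> Y" for x y using XY that by auto
  have cross: "A$$(x,y) = c" if "x \<in> X" "y \<in> Y" for x y
  proof -
    have yk: "y \<in> {0..<n} - X" "x0 \<in> {0..<n} - Y" using that Yn Xn x0 XY(3) by auto
    have "A$$(x,y) = A$$(x0,y)" using XY(5) that(1) x0 yk(1) unfolding clan_def by blast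
    also have "\<dots> = A$$(x0,y0)" using XY(6) that(2) y0 yk(2) unfolding clan_def by blast
    finally show ?thesis unfolding c_def .
  qed
  have crossr: "A$$(y,x) = 1 - c" if "x \<in> X" "y \<in> Y" for x y
    using gt_sum[OF GA Xn[OF that(1)] Yn[OF that(2)] XYne[OF that]] cross[OF that] by simp
  have card3: "card {a,b,d::nat} \<le> 4" for a b d by (simp add: card_insert_if)
  have card2: "card {a,b::nat} \<le> 4" for a b by (simp add: card_insert_if)
  have Bcross: "B$$(x,y) = 1 - c" if "x \<in> X" "y \<in> Y" "B$$(x,y) \<noteq> c" for x y
  proof -
    have "principal_minor A {x,y} = principal_minor B {x,y}"
      using pm[OF _ card2] Xn Yn that by auto
    then have e: "A$$(x,y)*A$$(y,x) = B$$(x,y)*B$$(y,x)"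
      using pm2[OF GA, of x y] pm2[OF GB, of x y] Xn Yn XYne that by simp
    have "B$$(y,x) = 1 - B$$(x,y)" using gt_sum[OF GB, of x y] Xn Yn XYne that by simp
    then have "c*(1-c) = B$$(x,y)*(1-B$$(x,y))" using e cross crossr that by simp
    moreover have "(B$$(x,y) - c) * (B$$(x,y) - (1 - c)) = c*(1-c) - B$$(x,y)*(1-B$$(x,y))"
      by (simp add: algebra_simps)
    ultimately have "(B$$(x,y) - c) * (B$$(x,y) - (1 - c)) = 0" by simp
    then show ?thesis using that by simp
  qed
  have T1: "B$$(y',y) = c" if "x \<in> X" "y \<in> Y" "y' \<in> Y" "B$$(x,y) = c" "B$$(x,y') \<noteq> c" for x y y'
  proof -
    have b': "B$$(x,y') = 1 - c" using Bcross that by blast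
    then have cne: "2*c - 1 \<noteq> 0" using that by auto
    have yy: "y \<noteq> y'" using that by auto
    have ns: "x<n" "y<n" "y'<n" "x\<noteq>y" "y\<noteq>y'" "x\<noteq>y'" using Xn Yn XYne that yy by auto
    have "principal_minor A {x,y,y'} = principal_minor B {x,y,y'}"
      using pm[OF _ card3] ns by auto
    then have e: "F3 A x y y' = F3 B x y y'" using pm3[OF GA ns] pm3[OF GB ns] by simp
    have a1: "A$$(x,y) = c" "A$$(x,y') = c" "A$$(y,x) = 1-c" "A$$(y',x) = 1-c" "A$$(y',y) = 1 - A$$(y,y')"
      using cross crossr that gt_sum[OF GA, of y y'] ns by auto
    have b1: "B$$(x,y) = c" "B$$(x,y') = 1-c" "B$$(y,x) = 1-c" "B$$(y',x) = c" "B$$(y',y) = 1 - B$$(y,y')"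
      using b' that gt_sum[OF GB, of y y'] gt_sum[OF GB, of x y] gt_sum[OF GB, of x y'] ns by auto
    have fa: "F3 A x y y' = c*(1-c)"
      unfolding F3_def a1 by (simp add: algebra_simps)
    have fb: "F3 B x y y' = c*B$$(y,y')*c + (1-c)*(1-B$$(y,y'))*(1-c)"
      unfolding F3_def b1 by (simp add: algebra_simps)
    have "(2*c-1)*(B$$(y,y') - (1-c)) = F3 B x y y' - F3 A x y y'" unfolding fa fb by (simp add: algebra_simps)
    then have "(2*c-1)*(B$$(y,y') - (1-c)) = 0" using e by simp
    then have "B$$(y,y') = 1 - c" using cne by simp
    then show ?thesis using gt_sum[OF GB, of y y'] ns by simp
  qed
  have T2: "B$$(x,x') = c" if "x \<in> X" "x' \<in> X" "y \<in> Y" "B$$(x,y) = c" "B$$(x',y) \<noteq> c" for x x' y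
  proof -
    have b': "B$$(x',y) = 1 - c" using Bcross that by blast
    then have cne: "2*c - 1 \<noteq> 0" using that by auto
    have xx: "x \<noteq> x'" using that by auto
    have ns: "x<n" "x'<n" "y<n" "x\<noteq>x'" "x'\<noteq>y" "x\<noteq>y" using Xn Yn XYne that xx by auto
    have "principal_minor A {x,x',y} = principal_minor B {x,x',y}"
      using pm[OF _ card3] ns by auto
    then have e: "F3 A x x' y = F3 B x x' y" using pm3[OF GA ns] pm3[OF GB ns] by simp
    have a1: "A$$(x',y) = c" "A$$(y,x) = 1-c" "A$$(x,y) = c" "A$$(y,x') = 1-c" "A$$(x',x) = 1 - A$$(x,x')"
      using cross crossr that gt_sum[OF GA, of x x'] ns by auto
    have b1: "B$$(x',y) = 1-c" "B$$(y,x) = 1-c" "B$$(x,y) = c" "B$$(y,x') = c" "B$$(x',x) = 1 - B$$(x,x')"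
      using b' that gt_sum[OF GB, of x x'] gt_sum[OF GB, of x y] gt_sum[OF GB, of x' y] ns by auto
    have fa: "F3 A x x' y = c*(1-c)"
      unfolding F3_def a1 by (simp add: algebra_simps)
    have fb: "F3 B x x' y = B$$(x,x')*(1-c)*(1-c) + c*c*(1-B$$(x,x'))"
      unfolding F3_def b1 by (simp add: algebra_simps)
    have "(1-2*c)*(B$$(x,x') - c) = F3 B x x' y - F3 A x x' y" unfolding fa fb by (simp add: algebra_simps)
    then have "(1-2*c)*(B$$(x,x') - c) = 0" using e by simp
    then show "B$$(x,x') = c" using cne by simp
  qed
  define N where "N x = {y\<in>Y. B$$(x,y) = c}" for x
  show ?thesis
  proof (cases "\<exists>x\<in>X. \<forall>y\<in>Y. B$$(x,y) = c")
    case True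
    define P where "P = {x\<in>X. \<forall>y\<in>Y. B$$(x,y) = c}"
    show ?thesis
    proof (rule sep_intro[OF GB, of P])
      show "P \<noteq> {}" "P \<subseteq> {0..<n}" using True XY unfolding P_def by auto
      show "{0..<n} - P \<noteq> {}" using XY unfolding P_def by auto
      fix p q assume p: "p \<in> P" and q: "q \<in> {0..<n} - P"
      show "B$$(p,q) = c"
      proof (cases "q \<in> Y")
        case True then show ?thesis using p unfolding P_def by auto
      next
        case False
        then have qX: "q \<in> X" using q XY by auto
        then obtain y where "y \<in> Y" "B$$(q,y) \<noteq> c" using q unfolding P_def by auto
        then show ?thesis using T2[of p q y] p qX unfolding P_def by auto
      qed
    qed
  next
    case nc1: False
    show ?thesis
    proof (cases "\<exists>y\<in>Y. \<forall>x\<in>X. B$$(x,y) \<noteq> c")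
      case True
      define P where "P = {y\<in>Y. \<forall>x\<in>X. B$$(x,y) \<noteq> c}"
      show ?thesis
      proof (rule sep_intro[OF GB, of P])
        show "P \<noteq> {}" "P \<subseteq> {0..<n}" using True XY unfolding P_def by auto
        show "{0..<n} - P \<noteq> {}" using XY unfolding P_def by auto
        fix p q assume p: "p \<in> P" and q: "q \<in> {0..<n} - P"
        show "B$$(p,q) = c"
        proof (cases "q \<in> X")
          case True
          then have "B$$(q,p) = 1 - c" using Bcross p unfolding P_def by auto
          then show ?thesis using gt_sum[OF GB, of q p] Xn Yn XYne True p unfolding P_def by auto
        next
          case False
          then have qY: "q \<in> Y" using q XY by auto
          then obtain x where "x \<in> X" "B$$(x,q) = c" using q unfolding P_def by auto
          then show ?thesis using T1[of x q p] p qY unfolding P_def by auto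
        qed
      qed
    next
      case nc2: False
      have finX: "finite X" using XY by (metis finite_Un finite_atLeastLessThan)
      have finY: "finite Y" using XY by (metis finite_Un finite_atLeastLessThan)
      define m where "m = Max ((\<lambda>x. card (N x)) ` X)"
      have "m \<in> (\<lambda>x. card (N x)) ` X" unfolding m_def using finX XY by (intro Max_in) auto
      then obtain xs where xs: "xs \<in> X" "card (N xs) = m" by auto
      have mx: "card (N x) \<le> card (N xs)" if "x \<in> X" for x
        unfolding xs(2) m_def using finX that by (intro Max_ge) auto
      obtain y where y: "y \<in> Y" "B$$(xs,y) \<noteq> c" using nc1 xs by auto
      obtain x where x: "x \<in> X" "B$$(x,y) = c" using nc2 y by auto
      have "\<not> N xs \<subseteq> N x"
      proof
        assume "N xs \<subseteq> N x"
        moreover have "y \<in> N x - N xs" using x y unfolding N_def by auto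
        ultimately have "N xs \<subset> N x" by auto
        moreover have "finite (N x)" using finY unfolding N_def by auto
        ultimately have "card (N xs) < card (N x)" by (rule psubset_card_mono[rotated])
        then show False using mx[OF x(1)] by simp
      qed
      then obtain y' where y': "y' \<in> Y" "B$$(xs,y') = c" "B$$(x,y') \<noteq> c" unfolding N_def by auto
      have 1: "B$$(y',y) = c" using T1[of x y y'] x y y' by auto
      have 2: "B$$(y,y') = c" using T1[of xs y' y] xs y y' by auto
      have "y \<noteq> y'" using y y' by auto
      then have "c = 1 - c" using gt_sum[OF GB, of y y'] 1 2 Yn y y' by simp
      then have "B$$(x,y') = 1 - c" using Bcross x y' by auto
      then show ?thesis using y'(3) \<open>c = 1 - c\<close> by simp
    qed
  qed
qed

theorem proposition5p5:
  fixes n :: nat and A B :: "real mat"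
  assumes "gen_tournament n A" and "gen_tournament n B"
    and "\<And>S. S \<subseteq> {0..<n} \<Longrightarrow> card S \<le> 4 \<Longrightarrow> principal_minor A S = principal_minor B S"
  shows "inseparable n A \<longleftrightarrow> inseparable n B"
  unfolding inseparable_def
  using sep_transfer[OF assms(1,2,3)] sep_transfer[OF assms(2,1)] assms(3) by metis

end
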